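(* Let $\Delta$ be a finite saturated sample set, $\delta$ a $\Delta$-diagram, and $t_1,t_2$ basic terms. If the time warps $f_1$ and $f_2$ strongly extend $D_{t_1}(\delta)$ and $D_{t_2}(\delta)$, respectively, then $f_1\circ f_2$ strongly extends $D_{t_1t_2}(\delta)$.
   Context: Time warps: join-preserving maps $f\colon\omega^+\to\omega^+$, $\omega^+=\omega\cup\{\omega\}$; $\mathrm{last}(f)=\min\{m\in\omega^+\mid f(m)=f(\omega)\}$. Basic terms are built from variables using $\cdot,{}',1$. Samples (formal expressions): $\alpha::=\kappa\mid t[\alpha]\mid \mathrm{suc}(\alpha)\mid\mathrm{last}(t)$ with $\kappa$ a time variable and $t$ a basic term. The relation $\leadsto$: $t[\alpha]\leadsto\alpha$, $\mathrm{suc}(\alpha)\leadsto\alpha$, $t[\alpha]\leadsto t[\mathrm{last}(t)]$, $(tu)[\alpha]\leadsto t[u[\alpha]]$, $t'[\alpha]\leadsto t[t'[\alpha]]$, $t'[\alpha]\leadsto t[\mathrm{suc}(t'[\alpha])]$; a sample set is saturated if closed under $\leadsto$. $S(n)=n+1$ for $n\in\omega$, $S(\omega)=\omega$. For saturated $\Delta$, a $\Delta$-diagram is $\delta\colon\Delta\to\omega^+$ such that, whenever the samples mentioned belong to $\Delta$: (1) $\delta(\alpha)\le\delta(\beta)\Rightarrow\delta(t[\alpha])\le\delta(t[\beta])$; (2) $\delta(\alpha)=0\Rightarrow\delta(t[\alpha])=0$; (3) $\delta(\mathrm{suc}(\alpha))=S(\delta(\alpha))$; (4) for $t[\alpha]\in\Delta$: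 $\delta(\mathrm{last}(t))\le\delta(\alpha)\iff\delta(t[\mathrm{last}(t)])=\delta(t[\alpha])$; (5) $\delta(\mathrm{last}(t))=\omega\Rightarrow\delta(t[\mathrm{last}(t)])=\omega$; (6) $\delta(1[\alpha])=\delta(\alpha)$; (7) $\delta(\mathrm{last}(1))=\omega$; (8) $\delta((tu)[\alpha])=\delta(t[u[\alpha]])$; (9) $\delta(\mathrm{last}(tu))=\omega\Rightarrow\delta(\mathrm{last}(t))=\delta(\mathrm{last}(u))=\omega$; (10) for $t'[\alpha]\in\Delta$: $0<\delta(\alpha)<\omega\Rightarrow\delta(t[t'[\alpha]])<\delta(\alpha)$; (11) for $t'[\alpha]\in\Delta$: $\delta(t'[\alpha])<\omega\Rightarrow\delta(\alpha)\le\delta(t[\mathrm{suc}(t'[\alpha])])$; (12) $\delta(\mathrm{last}(t'))=\omega\Rightarrow\delta(\mathrm{last}(t))=\omega$. For a basic term $t$, $D_t(\delta)=\{(\delta(\alpha),\delta(t[\alpha]))\mid t[\alpha]\in\Delta\}$. A time warp $f$ extends $D_t(\delta)$ if $f(i)=j$ for all $(i,j)\in D_t(\delta)$, and strongly extends it if moreover $D_t(\delta)\neq\emptyset$ and $\delta(\mathrm{last}(t))=\omega$ together imply $\mathrm{last}(f)=\omega$. *)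

theory Defs
  imports "HOL-Library.Extended_Nat"
begin

text \<open>omega^+ is modelled by enat, with omega = \<infinity>.
  A time warp is a map omega^+ \<Rightarrow> omega^+ preserving all joins (suprema), including the empty join.\<close>

definition time_warp :: "(enat \<Rightarrow> enat) \<Rightarrow> bool" where
  "time_warp f \<longleftrightarrow> (\<forall>S. f (Sup S) = Sup (f ` S))"

definition last_tw :: "(enat \<Rightarrow> enat) \<Rightarrow> enat" where
  "last_tw f = (LEAST m. f m = f \<infinity>)"

datatype bterm = BVar nat | Comp bterm bterm | Prime bterm | One

datatype sample = TVar nat | App bterm sample | SucS sample | LastS bterm

inductive leadsto :: "sample \<Rightarrow> sample \<Rightarrow> bool" where
  "leadsto (App t a) a"
| "leadsto (SucS a) a"
| "leadsto (App t a) (App t (LastS t))"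
| "leadsto (App (Comp t u) a) (App t (App u a))"
| "leadsto (App (Prime t) a) (App t (App (Prime t) a))"
| "leadsto (App (Prime t) a) (App t (SucS (App (Prime t) a)))"

definition saturated :: "sample set \<Rightarrow> bool" where
  "saturated \<Delta> \<longleftrightarrow> (\<forall>a b. a \<in> \<Delta> \<longrightarrow> leadsto a b \<longrightarrow> b \<in> \<Delta>)"

definition diagram :: "sample set \<Rightarrow> (sample \<Rightarrow> enat) \<Rightarrow> bool" where
  "diagram \<Delta> \<delta> \<longleftrightarrow>
    (\<forall>t a b. a \<in> \<Delta> \<longrightarrow> b \<in> \<Delta> \<longrightarrow> App t a \<in> \<Delta> \<longrightarrow> App t b \<in> \<Delta> \<longrightarrow>
        \<delta> a \<le> \<delta> b \<longrightarrow> \<delta> (App t a) \<le> \<delta> (App t b))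
  \<and> (\<forall>t a. a \<in> \<Delta> \<longrightarrow> App t a \<in> \<Delta> \<longrightarrow> \<delta> a = 0 \<longrightarrow> \<delta> (App t a) = 0)
  \<and> (\<forall>a. a \<in> \<Delta> \<longrightarrow> SucS a \<in> \<Delta> \<longrightarrow> \<delta> (SucS a) = eSuc (\<delta> a))
  \<and> (\<forall>t a. App t a \<in> \<Delta> \<longrightarrow> a \<in> \<Delta> \<longrightarrow> LastS t \<in> \<Delta> \<longrightarrow> App t (LastS t) \<in> \<Delta> \<longrightarrow>
        (\<delta> (LastS t) \<le> \<delta> a \<longleftrightarrow> \<delta> (App t (LastS t)) = \<delta> (App t a)))
  \<and> (\<forall>t. LastS t \<in> \<Delta> \<longrightarrow> App t (LastS t) \<in> \<Delta> \<longrightarrow>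
        \<delta> (LastS t) = \<infinity> \<longrightarrow> \<delta> (App t (LastS t)) = \<infinity>)
  \<and> (\<forall>a. a \<in> \<Delta> \<longrightarrow> App One a \<in> \<Delta> \<longrightarrow> \<delta> (App One a) = \<delta> a)
  \<and> (LastS One \<in> \<Delta> \<longrightarrow> \<delta> (LastS One) = \<infinity>)
  \<and> (\<forall>t u a. App (Comp t u) a \<in> \<Delta> \<longrightarrow> App t (App u a) \<in> \<Delta> \<longrightarrow>
        \<delta> (App (Comp t u) a) = \<delta> (App t (App u a)))
  \<and> (\<forall>t u. LastS (Comp t u) \<in> \<Delta> \<longrightarrow> LastS t \<in> \<Delta> \<longrightarrow> LastS u \<in> \<Delta> \<longrightarrow>
        \<delta> (LastS (Comp t u)) = \<infinity> \<longrightarrow> \<delta> (LastS t) = \<infinity> \<and> \<delta> (LastS u) = \<infinity>)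
  \<and> (\<forall>t a. App (Prime t) a \<in> \<Delta> \<longrightarrow> a \<in> \<Delta> \<longrightarrow> App t (App (Prime t) a) \<in> \<Delta> \<longrightarrow>
        0 < \<delta> a \<longrightarrow> \<delta> a < \<infinity> \<longrightarrow> \<delta> (App t (App (Prime t) a)) < \<delta> a)
  \<and> (\<forall>t a. App (Prime t) a \<in> \<Delta> \<longrightarrow> a \<in> \<Delta> \<longrightarrow> App t (SucS (App (Prime t) a)) \<in> \<Delta> \<longrightarrow>
        \<delta> (App (Prime t) a) < \<infinity> \<longrightarrow> \<delta> a \<le> \<delta> (App t (SucS (App (Prime t) a))))
  \<and> (\<forall>t. LastS (Prime t) \<in> \<Delta> \<longrightarrow> LastS t \<in> \<Delta> \<longrightarrow>
        \<delta> (LastS (Prime t)) = \<infinity> \<longrightarrow> \<delta> (LastS t) = \<infinity>)"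

definition D_of :: "sample set \<Rightarrow> (sample \<Rightarrow> enat) \<Rightarrow> bterm \<Rightarrow> (enat \<times> enat) set" where
  "D_of \<Delta> \<delta> t = {(\<delta> a, \<delta> (App t a)) | a. App t a \<in> \<Delta>}"

definition extends_D :: "(enat \<Rightarrow> enat) \<Rightarrow> (enat \<times> enat) set \<Rightarrow> bool" where
  "extends_D f D \<longleftrightarrow> time_warp f \<and> (\<forall>(i, j) \<in> D. f i = j)"

definition strongly_extends :: "sample set \<Rightarrow> (sample \<Rightarrow> enat) \<Rightarrow> bterm \<Rightarrow> (enat \<Rightarrow> enat) \<Rightarrow> bool" where
  "strongly_extends \<Delta> \<delta> t f \<longleftrightarrow> extends_D f (D_of \<Delta> \<delta> t) \<and>
     (D_of \<Delta> \<delta> t \<noteq> {} \<and> \<delta> (LastS t) = \<infinity> \<longrightarrow> last_tw f = \<infinity>)"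

end

theory Submission
  imports Defs
begin

lemma tw_mono: assumes "time_warp f" "a \<le> b" shows "f a \<le> f b"
proof -
  have "f (Sup {a,b}) = Sup (f ` {a,b})" using assms(1) unfolding time_warp_def by blast
  moreover have "Sup {a,b} = b" using assms(2) by (simp add: sup_absorb2)
  ultimately have "f b = sup (f a) (f b)" by simp
  thus ?thesis by (metis sup.cobounded1)
qed

lemma last_inf_D:
  assumes tw: "time_warp f" and l: "last_tw f = \<infinity>"
  shows "f (enat n) < f \<infinity>" "f \<infinity> = \<infinity>"
proof -
  have ne: "f (enat k) \<noteq> f \<infinity>" for k
  proof
    assume "f (enat k) = f \<infinity>"
    hence "(LEAST m. f m = f \<infinity>) \<le> enat k" by (rule Least_le)
    thus False using l unfolding last_tw_def by simp
  qed
  have lt: "f (enat k) < f \<infinity>" for k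
    using tw_mono[OF tw, of "enat k" \<infinity>] ne[of k] by simp
  thus "f (enat n) < f \<infinity>" .
  show "f \<infinity> = \<infinity>"
  proof (rule ccontr)
    assume "f \<infinity> \<noteq> \<infinity>"
    then obtain c where c: "f \<infinity> = enat c" by auto
    have "Sup (range enat) = (\<infinity>::enat)" proof -
      have "inj enat" by (rule injI) simp
      hence "infinite (range enat)" using finite_imageD infinite_UNIV_nat by blast
      thus ?thesis by (simp add: Sup_enat_def)
    qed
    hence "f \<infinity> = Sup (f ` range enat)" using tw unfolding time_warp_def by metis
    have "c > 0" using lt[of 0] c by (cases "f (enat 0)") auto
    have "f (enat k) \<le> enat (c - 1)" for k
      using lt[of k] c by (cases "f (enat k)") auto
    hence "Sup (f ` range enat) \<le> enat (c - 1)" by (auto intro!: Sup_least)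
    with \<open>f \<infinity> = Sup (f ` range enat)\<close> c \<open>c > 0\<close> show False by (metis diff_less enat_ord_simps(1) leD zero_less_one)
  qed
qed

lemma last_inf_I:
  assumes "\<And>n. f (enat n) \<noteq> f \<infinity>" shows "last_tw f = \<infinity>"
proof -
  have "f (LEAST m. f m = f \<infinity>) = f \<infinity>" by (rule LeastI[of _ \<infinity>]) simp
  thus ?thesis using assms unfolding last_tw_def by (cases "LEAST m. f m = f \<infinity>") auto
qed

lemma diag8: "diagram \<Delta> \<delta> \<Longrightarrow> (\<forall>t u a. App (Comp t u) a \<in> \<Delta> \<longrightarrow> App t (App u a) \<in> \<Delta> \<longrightarrow>
        \<delta> (App (Comp t u) a) = \<delta> (App t (App u a)))"
  unfolding diagram_def by (elim conjE) assumption

lemma diag9: "diagram \<Delta> \<delta> \<Longrightarrow> (\<forall>t u. LastS (Comp t u) \<in> \<Delta> \<longrightarrow> LastS t \<in> \<Delta> \<longrightarrow> LastS u \<in> \<Delta> \<longrightarrow>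
        \<delta> (LastS (Comp t u)) = \<infinity> \<longrightarrow> \<delta> (LastS t) = \<infinity> \<and> \<delta> (LastS u) = \<infinity>)"
  unfolding diagram_def by (elim conjE) assumption

theorem lemma3p5:
  assumes "finite \<Delta>" and "saturated \<Delta>" and "diagram \<Delta> \<delta>"
    and "time_warp f1" and "time_warp f2"
    and "strongly_extends \<Delta> \<delta> t1 f1" and "strongly_extends \<Delta> \<delta> t2 f2"
  shows "strongly_extends \<Delta> \<delta> (Comp t1 t2) (f1 \<circ> f2)"
proof -
  have sat: "\<And>a b. a \<in> \<Delta> \<Longrightarrow> leadsto a b \<Longrightarrow> b \<in> \<Delta>" using assms(2) unfolding saturated_def by blast
  have d8: "\<And>t u a. App (Comp t u) a \<in> \<Delta> \<Longrightarrow> App t (App u a) \<in> \<Delta> \<Longrightarrow>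
        \<delta> (App (Comp t u) a) = \<delta> (App t (App u a))" using diag8[OF assms(3)] by blast
  have d9: "\<And>t u. LastS (Comp t u) \<in> \<Delta> \<Longrightarrow> LastS t \<in> \<Delta> \<Longrightarrow> LastS u \<in> \<Delta> \<Longrightarrow>
        \<delta> (LastS (Comp t u)) = \<infinity> \<Longrightarrow> \<delta> (LastS t) = \<infinity> \<and> \<delta> (LastS u) = \<infinity>"
    using diag9[OF assms(3)] by blast
  have e1: "\<And>a. App t1 a \<in> \<Delta> \<Longrightarrow> f1 (\<delta> a) = \<delta> (App t1 a)"
  proof -
    fix a assume "App t1 a \<in> \<Delta>"
    hence "(\<delta> a, \<delta> (App t1 a)) \<in> D_of \<Delta> \<delta> t1" unfolding D_of_def by blast
    moreover have "\<forall>(i, j) \<in> D_of \<Delta> \<delta> t1. f1 i = j" using assms(6) unfolding strongly_extends_def extends_D_def by (elim conjE) assumption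
    ultimately show "f1 (\<delta> a) = \<delta> (App t1 a)" by fastforce
  qed
  have e2: "\<And>a. App t2 a \<in> \<Delta> \<Longrightarrow> f2 (\<delta> a) = \<delta> (App t2 a)"
  proof -
    fix a assume "App t2 a \<in> \<Delta>"
    hence "(\<delta> a, \<delta> (App t2 a)) \<in> D_of \<Delta> \<delta> t2" unfolding D_of_def by blast
    moreover have "\<forall>(i, j) \<in> D_of \<Delta> \<delta> t2. f2 i = j" using assms(7) unfolding strongly_extends_def extends_D_def by (elim conjE) assumption
    ultimately show "f2 (\<delta> a) = \<delta> (App t2 a)" by fastforce
  qed
  have tw: "time_warp (f1 \<circ> f2)"
    unfolding time_warp_def
  proof
    fix S
    have "f2 (Sup S) = Sup (f2 ` S)" using assms(5) unfolding time_warp_def by blast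
    moreover have "f1 (Sup (f2 ` S)) = Sup (f1 ` f2 ` S)" using assms(4) unfolding time_warp_def by blast
    ultimately show "(f1 \<circ> f2) (Sup S) = Sup ((f1 \<circ> f2) ` S)" by (simp add: image_comp)
  qed
  have ext: "\<forall>(i, j) \<in> D_of \<Delta> \<delta> (Comp t1 t2). (f1 \<circ> f2) i = j"
  proof (clarsimp simp: D_of_def)
    fix a assume A: "App (Comp t1 t2) a \<in> \<Delta>"
    have B: "App t1 (App t2 a) \<in> \<Delta>" using sat[OF A] leadsto.intros by blast
    have C: "App t2 a \<in> \<Delta>" using sat[OF B] leadsto.intros by blast
    show "f1 (f2 (\<delta> a)) = \<delta> (App (Comp t1 t2) a)"
      using e2[OF C] e1[OF B] d8[OF A B] by simp
  qed
  have last: "last_tw (f1 \<circ> f2) = \<infinity>"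
    if ne: "D_of \<Delta> \<delta> (Comp t1 t2) \<noteq> {}" and inf: "\<delta> (LastS (Comp t1 t2)) = \<infinity>"
  proof -
    obtain a where A: "App (Comp t1 t2) a \<in> \<Delta>" using ne unfolding D_of_def by blast
    have B: "App t1 (App t2 a) \<in> \<Delta>" using sat[OF A] leadsto.intros by blast
    have C: "App t2 a \<in> \<Delta>" using sat[OF B] leadsto.intros by blast
    have A1: "App (Comp t1 t2) (LastS (Comp t1 t2)) \<in> \<Delta>" using sat[OF A] leadsto.intros by blast
    have L: "LastS (Comp t1 t2) \<in> \<Delta>" using sat[OF A1] leadsto.intros by blast
    have B1: "App t1 (LastS t1) \<in> \<Delta>" using sat[OF B] leadsto.intros by blast
    have L1: "LastS t1 \<in> \<Delta>" using sat[OF B1] leadsto.intros by blast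
    have C1: "App t2 (LastS t2) \<in> \<Delta>" using sat[OF C] leadsto.intros by blast
    have L2: "LastS t2 \<in> \<Delta>" using sat[OF C1] leadsto.intros by blast
    have "\<delta> (LastS t1) = \<infinity>" "\<delta> (LastS t2) = \<infinity>" using d9[OF L L1 L2 inf] by auto
    moreover have "D_of \<Delta> \<delta> t1 \<noteq> {}" using B unfolding D_of_def by blast
    moreover have "D_of \<Delta> \<delta> t2 \<noteq> {}" using C unfolding D_of_def by blast
    ultimately have l1: "last_tw f1 = \<infinity>" and l2: "last_tw f2 = \<infinity>"
      using assms(6,7) unfolding strongly_extends_def by auto
    show ?thesis
    proof (rule last_inf_I)
      fix n
      have "f2 (enat n) < f2 \<infinity>" "f2 \<infinity> = \<infinity>" using last_inf_D[OF assms(5) l2] by auto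
      then obtain k where k: "f2 (enat n) = enat k" by (cases "f2 (enat n)") auto
      have "f1 (enat k) < f1 \<infinity>" using last_inf_D[OF assms(4) l1] by auto
      thus "(f1 \<circ> f2) (enat n) \<noteq> (f1 \<circ> f2) \<infinity>" using k \<open>f2 \<infinity> = \<infinity>\<close> by simp
    qed
  qed
  show ?thesis unfolding strongly_extends_def extends_D_def using tw ext last by blast
qed

end
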